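(* For every $\Phi\in\mathcal C$ one has $\mathcal L(\Phi)\in\mathcal C$, and there is a constant $C_6$ (independent of $\Phi$ and $n$) such that for all $n\ge1$ \[ |\mathcal L^n(\Phi)|_\beta\le|\Phi|_\beta\,(C_E\eta)^{\beta n}+C_6|\Phi|_\infty\,C_E^\beta\sum_{i=0}^\infty(C_E\eta)^{i\beta}. \]
   Context: Let $I=[0,1)$ carry a metric $d_I$, fix $\theta\in(0,1)$, and let $\Omega=I^{\mathbb Z}$ with metric $d(x,y)=\sup_{k\in\mathbb Z}\theta^{|k|}d_I(x_k,y_k)$. Let $\tau:I\to I$ have full branches, so that $b=\#\tau^{-1}(t)$ is constant; let $p_\tau$ be a fixed point of $\tau$. Assume there is $\eta\in(0,1)$ such that every inverse branch $\zeta$ of $\tau$ satisfies $d_I(\zeta(s),\zeta(t))\le\eta\,d_I(s,t)$. Let $(\bar\tau x)_i=\tau(x_i)$. Let $\pi_k:\Omega\to\Omega$ keep the coordinates $|i|\le k$ and set the others to $p_\tau$; $\Phi_k=\Phi\circ\pi_k$. Fix $\beta\in(0,1]$; $|\Phi|_\infty=\sup|\Phi|$, $|\Phi|_\beta=\sup_{k\in\mathbb N}\sup_{x\neq y}|\Phi_k(x)-\Phi_k(y)|/d(x,y)^\beta$, $\|\Phi\|=|\Phi|_\infty+|\Phi|_\beta$, $\mathcal C=\{\Phi\in C(\Omega):\|\Phi\|<\infty\}$. An inverse branch of order $k$ is a choice $\zeta=(\zeta_j)_{|j|\le k}$ of inverse branches of $\tau$, with $(\zeta_x)_j=\zeta_j(x_j)$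 for $|j|\le k$, $(\zeta_x)_j=x_j$ otherwise; $b_k=b^{2k+1}$. For real $f\in\mathcal C$, $P_k\Phi(x)=b_k^{-1}\sum_{|\zeta|=k}e^{f(\pi_k\zeta_x)}\Phi(\pi_k\zeta_x)$ and $P\Phi=\lim_kP_k\Phi$ pointwise. Fix a Borel probability measure $\nu_0$ with $P^*\nu_0=\lambda\nu_0$, $\lambda=\int P\mathbf 1\,d\nu_0$, and let $h\in\mathcal C$ be the unique strictly positive function with $Ph=\lambda h$, $\nu_0(h)=1$, $h(x)\le \exp\!\big(|f|_\beta\frac{\eta^\beta}{1-\eta^\beta}d(x,y)^\beta\big)h(y)$ for all $x,y$. Define $L\Phi=P(h\Phi)/(\lambda h)$. Let $\sigma$ be the shift $(\sigma x)_i=x_{i+1}$. Let $E:\Omega\to\Omega$ be invertible and suppose there is $C_E\in(0,\eta^{-1})$ with $d(\sigma^nE^{-1}x,\sigma^nE^{-1}y)\le C_E\,d(\sigma^nx,\sigma^ny)$ for all $n\in\mathbb Z$ and $x,y\in\Omega$. The coupled map is $T=E\circ\bar\tau$ and $\mathcal L\Phi(x)=L(\Phi)(E^{-1}x)$. *)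

theory Defs
  imports "HOL-Probability.Probability"
begin

type_synonym pt = "int \<Rightarrow> real"

definition Iset :: "real set" where
  "Iset = {0..<1}"

definition Omega :: "pt set" where
  "Omega = {x. \<forall>i. x i \<in> Iset}"

definition dOm :: "(real \<Rightarrow> real \<Rightarrow> real) \<Rightarrow> real \<Rightarrow> pt \<Rightarrow> pt \<Rightarrow> real" where
  "dOm dI \<theta> x y = (SUP k::int. \<theta> ^ nat \<bar>k\<bar> * dI (x k) (y k))"

definition metric_on :: "real set \<Rightarrow> (real \<Rightarrow> real \<Rightarrow> real) \<Rightarrow> bool" where
  "metric_on A dI \<longleftrightarrow>
     (\<forall>s\<in>A. \<forall>t\<in>A. 0 \<le> dI s t \<and> (dI s t = 0 \<longleftrightarrow> s = t) \<and> dI s t = dI t s) \<and>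
     (\<forall>s\<in>A. \<forall>t\<in>A. \<forall>u\<in>A. dI s u \<le> dI s t + dI t u)"

definition pik :: "real \<Rightarrow> nat \<Rightarrow> pt \<Rightarrow> pt" where
  "pik p k x = (\<lambda>i. if \<bar>i\<bar> \<le> int k then x i else p)"

definition shiftn :: "int \<Rightarrow> pt \<Rightarrow> pt" where
  "shiftn n x = (\<lambda>i. x (i + n))"

text \<open>Inverse branches of tau are indexed by j < b via zeta j.
  An inverse branch of order k is a choice c : {-k..k} -> {..<b};
  zeta_x is given by branch_apply.\<close>
definition branch_apply :: "(nat \<Rightarrow> real \<Rightarrow> real) \<Rightarrow> nat \<Rightarrow> (int \<Rightarrow> nat) \<Rightarrow> pt \<Rightarrow> pt" where
  "branch_apply zeta k c x = (\<lambda>j. if \<bar>j\<bar> \<le> int k then zeta (c j) (x j) else x j)"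

definition branches :: "nat \<Rightarrow> nat \<Rightarrow> (int \<Rightarrow> nat) set" where
  "branches b k = PiE {- int k .. int k} (\<lambda>_. {..<b})"

definition Pk :: "nat \<Rightarrow> (nat \<Rightarrow> real \<Rightarrow> real) \<Rightarrow> real \<Rightarrow> (pt \<Rightarrow> real) \<Rightarrow> nat
                   \<Rightarrow> (pt \<Rightarrow> real) \<Rightarrow> pt \<Rightarrow> real" where
  "Pk b zeta p f k \<Phi> x =
     (1 / real b ^ (2 * k + 1)) *
     (\<Sum>c\<in>branches b k. exp (f (pik p k (branch_apply zeta k c x))) *
                          \<Phi> (pik p k (branch_apply zeta k c x)))"

definition Pop :: "nat \<Rightarrow> (nat \<Rightarrow> real \<Rightarrow> real) \<Rightarrow> real \<Rightarrow> (pt \<Rightarrow> real)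
                   \<Rightarrow> (pt \<Rightarrow> real) \<Rightarrow> pt \<Rightarrow> real" where
  "Pop b zeta p f \<Phi> x = lim (\<lambda>k. Pk b zeta p f k \<Phi> x)"

definition sup_norm :: "(pt \<Rightarrow> real) \<Rightarrow> ereal" where
  "sup_norm \<Phi> = (SUP x\<in>Omega. ereal \<bar>\<Phi> x\<bar>)"

definition holder_semi :: "(pt \<Rightarrow> pt \<Rightarrow> real) \<Rightarrow> real \<Rightarrow> real \<Rightarrow> (pt \<Rightarrow> real) \<Rightarrow> ereal" where
  "holder_semi d p \<beta> \<Phi> =
     (SUP k::nat. SUP xy\<in>{(x, y). x \<in> Omega \<and> y \<in> Omega \<and> x \<noteq> y}.
        ereal (\<bar>\<Phi> (pik p k (fst xy)) - \<Phi> (pik p k (snd xy))\<bar> / (d (fst xy) (snd xy)) powr \<beta>))"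

definition cont_d :: "(pt \<Rightarrow> pt \<Rightarrow> real) \<Rightarrow> (pt \<Rightarrow> real) \<Rightarrow> bool" where
  "cont_d d \<Phi> \<longleftrightarrow>
     (\<forall>x\<in>Omega. \<forall>\<epsilon>>0. \<exists>\<delta>>0. \<forall>y\<in>Omega. d x y < \<delta> \<longrightarrow> \<bar>\<Phi> y - \<Phi> x\<bar> < \<epsilon>)"

definition Cspace :: "(pt \<Rightarrow> pt \<Rightarrow> real) \<Rightarrow> real \<Rightarrow> real \<Rightarrow> (pt \<Rightarrow> real) set" where
  "Cspace d p \<beta> = {\<Phi>. cont_d d \<Phi> \<and> sup_norm \<Phi> + holder_semi d p \<beta> \<Phi> < \<infinity>}"

definition open_d :: "(pt \<Rightarrow> pt \<Rightarrow> real) \<Rightarrow> pt set \<Rightarrow> bool" where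
  "open_d d U \<longleftrightarrow> U \<subseteq> Omega \<and> (\<forall>x\<in>U. \<exists>r>0. {y\<in>Omega. d x y < r} \<subseteq> U)"

definition borel_d :: "(pt \<Rightarrow> pt \<Rightarrow> real) \<Rightarrow> pt set set" where
  "borel_d d = sigma_sets Omega {U. open_d d U}"

definition Lop :: "nat \<Rightarrow> (nat \<Rightarrow> real \<Rightarrow> real) \<Rightarrow> real \<Rightarrow> (pt \<Rightarrow> real) \<Rightarrow> (pt \<Rightarrow> real) \<Rightarrow> real
                   \<Rightarrow> (pt \<Rightarrow> real) \<Rightarrow> pt \<Rightarrow> real" where
  "Lop b zeta p f h lam \<Phi> x = Pop b zeta p f (\<lambda>y. h y * \<Phi> y) x / (lam * h x)"

definition Lcal :: "nat \<Rightarrow> (nat \<Rightarrow> real \<Rightarrow> real) \<Rightarrow> real \<Rightarrow> (pt \<Rightarrow> real) \<Rightarrow> (pt \<Rightarrow> real) \<Rightarrow> real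
                   \<Rightarrow> (pt \<Rightarrow> pt) \<Rightarrow> (pt \<Rightarrow> real) \<Rightarrow> pt \<Rightarrow> real" where
  "Lcal b zeta p f h lam E \<Phi> x = Lop b zeta p f h lam \<Phi> (inv_into Omega E x)"

end

theory Submission
  imports Defs
begin


definition HolB :: "(pt \<Rightarrow> pt \<Rightarrow> real) \<Rightarrow> real \<Rightarrow> real \<Rightarrow> (pt \<Rightarrow> real) \<Rightarrow> real \<Rightarrow> real \<Rightarrow> bool" where
  "HolB d p \<beta> g M K \<longleftrightarrow> (\<forall>x\<in>Omega. \<bar>g x\<bar> \<le> M) \<and>
     (\<forall>k x y. x \<in> Omega \<longrightarrow> y \<in> Omega \<longrightarrow> \<bar>g (pik p k x) - g (pik p k y)\<bar> \<le> K * d x y powr \<beta>)"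

definition avgk :: "nat \<Rightarrow> (nat \<Rightarrow> real \<Rightarrow> real) \<Rightarrow> real \<Rightarrow> (pt \<Rightarrow> real) \<Rightarrow> nat \<Rightarrow> pt \<Rightarrow> real" where
  "avgk b zeta p G k x = (1 / real b ^ (2 * k + 1)) *
     (\<Sum>c\<in>branches b k. G (pik p k (branch_apply zeta k c x)))"

lemma Pk_avgk: "Pk b zeta p f k \<Phi> x = avgk b zeta p (\<lambda>y. exp (f y) * \<Phi> y) k x"
  unfolding Pk_def avgk_def by simp

lemma pik_idem: "pik p k (pik p k x) = pik p k x"
  unfolding pik_def by auto

lemma x0_Omega: "(\<lambda>_. 0) \<in> Omega" and x1_Omega: "(\<lambda>_. 1/2) \<in> Omega"
  unfolding Omega_def Iset_def by auto

lemma pik_Omega: "p \<in> Iset \<Longrightarrow> x \<in> Omega \<Longrightarrow> pik p k x \<in> Omega"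
  unfolding Omega_def pik_def by auto

lemma branches_mem: "c \<in> branches b k \<Longrightarrow> \<bar>j\<bar> \<le> int k \<Longrightarrow> c j < b"
  unfolding branches_def by (auto simp: PiE_def Pi_def abs_le_iff)

lemma ba_Omega: "\<forall>j<b. \<forall>t\<in>Iset. zeta j t \<in> Iset \<Longrightarrow> c \<in> branches b k \<Longrightarrow> x \<in> Omega
   \<Longrightarrow> branch_apply zeta k c x \<in> Omega"
  unfolding Omega_def branch_apply_def using branches_mem by auto

lemma finite_branches: "finite (branches b k)"
  unfolding branches_def by (auto intro: finite_PiE)

lemma card_branches: "card (branches b k) = b ^ (2 * k + 1)"
proof -
  have "card {- int k..int k} = 2 * k + 1" by simp
  then show ?thesis unfolding branches_def by (simp add: card_PiE)
qed

lemma branches_ne: "0 < b \<Longrightarrow> branches b k \<noteq> {}"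
  unfolding branches_def by (auto simp: PiE_eq_empty_iff)

lemma sum_PiE_insert_indep:
  assumes "finite S" "x \<notin> S" "finite (T x)"
    and indep: "\<And>g y. g \<in> PiE S T \<Longrightarrow> y \<in> T x \<Longrightarrow> F (g(x := y)) = F g"
  shows "(\<Sum>c\<in>PiE (insert x S) T. F c) = real (card (T x)) * (\<Sum>g\<in>PiE S T. F g)"
proof -
  have "(\<Sum>c\<in>PiE (insert x S) T. F c) = (\<Sum>yg\<in>T x \<times> PiE S T. F ((\<lambda>(y, g). g(x := y)) yg))"
    unfolding PiE_insert_eq by (subst sum.reindex) (auto simp: inj_combinator assms)
  also have "\<dots> = (\<Sum>y\<in>T x. \<Sum>g\<in>PiE S T. F (g(x := y)))"
    by (simp add: sum.cartesian_product prod.case_distrib)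
  also have "\<dots> = (\<Sum>y\<in>T x. \<Sum>g\<in>PiE S T. F g)"
    by (intro sum.cong refl) (simp add: indep)
  finally show ?thesis by simp
qed

lemma conv_geom:
  fixes X :: "nat \<Rightarrow> real"
  assumes "\<And>k. \<bar>X (Suc k) - X k\<bar> \<le> c * q ^ k" "0 \<le> q" "q < 1"
  shows "convergent X"
proof -
  have s: "summable (\<lambda>k. X (Suc k) - X k)"
    by (rule summable_comparison_test[of _ "\<lambda>k. c * q ^ k"])
       (use assms in \<open>auto intro!: summable_mult summable_geometric\<close>)
  have "(\<lambda>n. X 0 + (\<Sum>i<n. X (Suc i) - X i)) \<longlonglongrightarrow> X 0 + (\<Sum>k. X (Suc k) - X k)"
    by (intro tendsto_add tendsto_const summable_LIMSEQ s)
  then have "X \<longlonglongrightarrow> X 0 + (\<Sum>k. X (Suc k) - X k)"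
    by (simp add: sum_lessThan_telescope)
  then show ?thesis by (rule convergentI)
qed

locale base =
  fixes dI :: "real \<Rightarrow> real \<Rightarrow> real" and \<theta> \<eta> \<beta> p :: real and b :: nat
    and zeta :: "nat \<Rightarrow> real \<Rightarrow> real" and d :: "pt \<Rightarrow> pt \<Rightarrow> real"
  assumes d_def: "d = dOm dI \<theta>"
    and dI_metric: "metric_on Iset dI"
    and dI_bdd: "bdd_above {dI s t | s t. s \<in> Iset \<and> t \<in> Iset}"
    and theta: "0 < \<theta>" "\<theta> < 1"
    and b_pos: "0 < b"
    and zeta_I: "\<forall>j<b. \<forall>t\<in>Iset. zeta j t \<in> Iset"
    and p_I: "p \<in> Iset"
    and eta: "0 < \<eta>" "\<eta> < 1"
    and contract: "\<forall>j<b. \<forall>s\<in>Iset. \<forall>t\<in>Iset. dI (zeta j s) (zeta j t) \<le> \<eta> * dI s t"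
    and beta: "0 < \<beta>" "\<beta> \<le> 1"
begin

definition D where "D = Sup {dI s t | s t. s \<in> Iset \<and> t \<in> Iset}"

lemma dI_nonneg: "s \<in> Iset \<Longrightarrow> t \<in> Iset \<Longrightarrow> 0 \<le> dI s t"
  using dI_metric unfolding metric_on_def by auto

lemma dI_refl: "s \<in> Iset \<Longrightarrow> dI s s = 0"
  using dI_metric unfolding metric_on_def by auto

lemma dI_pos: "s \<in> Iset \<Longrightarrow> t \<in> Iset \<Longrightarrow> s \<noteq> t \<Longrightarrow> 0 < dI s t"
  using dI_metric unfolding metric_on_def by (metis order_le_less)

lemma dI_le_D: "s \<in> Iset \<Longrightarrow> t \<in> Iset \<Longrightarrow> dI s t \<le> D"
  unfolding D_def by (rule cSup_upper) (use dI_bdd in auto)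

lemma D_nonneg: "0 \<le> D"
  using dI_le_D[of 0 0] dI_nonneg[of 0 0] by (simp add: Iset_def)

lemma coord_le_D: "x \<in> Omega \<Longrightarrow> y \<in> Omega \<Longrightarrow> \<theta> ^ nat \<bar>k\<bar> * dI (x k) (y k) \<le> D"
proof -
  assume x: "x \<in> Omega" and y: "y \<in> Omega"
  then have I: "x k \<in> Iset" "y k \<in> Iset" unfolding Omega_def by auto
  have "\<theta> ^ nat \<bar>k\<bar> * dI (x k) (y k) \<le> 1 * dI (x k) (y k)"
    by (intro mult_right_mono power_le_one) (use theta dI_nonneg I in auto)
  also have "\<dots> \<le> D" using dI_le_D I by simp
  finally show ?thesis .
qed

lemma bdd_coords: assumes "x \<in> Omega" "y \<in> Omega" shows "bdd_above (range (\<lambda>k::int. \<theta> ^ nat \<bar>k\<bar> * dI (x k) (y k)))"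
  by (rule bdd_aboveI2[where M=D]) (rule coord_le_D[OF assms])

lemma coord_le: "x \<in> Omega \<Longrightarrow> y \<in> Omega \<Longrightarrow> \<theta> ^ nat \<bar>k\<bar> * dI (x k) (y k) \<le> d x y"
  unfolding d_def dOm_def by (rule cSUP_upper) (use bdd_coords in auto)

lemma d_le: "(\<And>k. \<theta> ^ nat \<bar>k\<bar> * dI (x k) (y k) \<le> B) \<Longrightarrow> d x y \<le> B"
  unfolding d_def dOm_def by (rule cSUP_least) auto

lemma d_nonneg: "x \<in> Omega \<Longrightarrow> y \<in> Omega \<Longrightarrow> 0 \<le> d x y"
proof -
  assume "x \<in> Omega" "y \<in> Omega"
  moreover then have "0 \<le> \<theta> ^ nat \<bar>0::int\<bar> * dI (x 0) (y 0)" using dI_nonneg by (auto simp: Omega_def)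
  ultimately show ?thesis using coord_le[of x y 0] by linarith
qed

lemma d_le_D: "x \<in> Omega \<Longrightarrow> y \<in> Omega \<Longrightarrow> d x y \<le> D"
  by (rule d_le) (rule coord_le_D)

lemma d_pos: "x \<in> Omega \<Longrightarrow> y \<in> Omega \<Longrightarrow> x \<noteq> y \<Longrightarrow> 0 < d x y"
proof -
  assume x: "x \<in> Omega" and y: "y \<in> Omega" and "x \<noteq> y"
  then obtain k where k: "x k \<noteq> y k" by auto
  have "0 < \<theta> ^ nat \<bar>k\<bar> * dI (x k) (y k)"
    using x y k theta dI_pos by (auto simp: Omega_def)
  then show ?thesis using coord_le[OF x y, of k] by linarith
qed

lemma d_pik: "x \<in> Omega \<Longrightarrow> y \<in> Omega \<Longrightarrow> d (pik p k x) (pik p k y) \<le> d x y"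
proof (rule d_le)
  fix j
  assume x: "x \<in> Omega" and y: "y \<in> Omega"
  show "\<theta> ^ nat \<bar>j\<bar> * dI (pik p k x j) (pik p k y j) \<le> d x y"
  proof (cases "\<bar>j\<bar> \<le> int k")
    case True then show ?thesis using coord_le[OF x y] by (simp add: pik_def)
  next
    case False then show ?thesis using d_nonneg[OF x y] dI_refl[OF p_I] by (simp add: pik_def)
  qed
qed

lemma d_contract:
  assumes x: "x \<in> Omega" and y: "y \<in> Omega" and c: "c \<in> branches b k"
  shows "d (pik p k (branch_apply zeta k c x)) (pik p k (branch_apply zeta k c y)) \<le> \<eta> * d x y"
proof (rule d_le)
  fix j
  show "\<theta> ^ nat \<bar>j\<bar> * dI (pik p k (branch_apply zeta k c x) j) (pik p k (branch_apply zeta k c y) j) \<le> \<eta> * d x y"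
  proof (cases "\<bar>j\<bar> \<le> int k")
    case True
    have I: "x j \<in> Iset" "y j \<in> Iset" using x y by (auto simp: Omega_def)
    have "dI (zeta (c j) (x j)) (zeta (c j) (y j)) \<le> \<eta> * dI (x j) (y j)"
      using contract branches_mem[OF c True] I by auto
    then have "\<theta> ^ nat \<bar>j\<bar> * dI (zeta (c j) (x j)) (zeta (c j) (y j)) \<le> \<theta> ^ nat \<bar>j\<bar> * (\<eta> * dI (x j) (y j))"
      using theta by (intro mult_left_mono) auto
    also have "\<dots> = \<eta> * (\<theta> ^ nat \<bar>j\<bar> * dI (x j) (y j))" by simp
    also have "\<dots> \<le> \<eta> * d x y" using coord_le[OF x y] eta by (intro mult_left_mono) auto
    finally show ?thesis using True by (simp add: pik_def branch_apply_def)
  next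
    case False then show ?thesis using d_nonneg[OF x y] dI_refl[OF p_I] eta by (simp add: pik_def)
  qed
qed

lemma d_tail:
  assumes w: "w \<in> Omega"
  shows "d w (pik p k w) \<le> \<theta> ^ Suc k * D"
proof (rule d_le)
  fix j
  show "\<theta> ^ nat \<bar>j\<bar> * dI (w j) (pik p k w j) \<le> \<theta> ^ Suc k * D"
  proof (cases "\<bar>j\<bar> \<le> int k")
    case True
    then show ?thesis using dI_refl w theta D_nonneg by (simp add: pik_def Omega_def)
  next
    case False
    have I: "w j \<in> Iset" using w by (auto simp: Omega_def)
    have "\<theta> ^ nat \<bar>j\<bar> \<le> \<theta> ^ Suc k"
      by (rule power_decreasing) (use False theta in auto)
    moreover have "0 \<le> dI (w j) p" "dI (w j) p \<le> D" using I p_I dI_nonneg dI_le_D by auto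
    ultimately show ?thesis using False theta
      by (simp add: pik_def mult_mono)
  qed
qed


lemma HolB_M_nonneg: "HolB d p \<beta> g M K \<Longrightarrow> 0 \<le> M"
  unfolding HolB_def using x0_Omega by force

lemma HolB_bound: "HolB d p \<beta> g M K \<Longrightarrow> x \<in> Omega \<Longrightarrow> \<bar>g x\<bar> \<le> M"
  unfolding HolB_def by auto

lemma HolB_hol: "HolB d p \<beta> g M K \<Longrightarrow> x \<in> Omega \<Longrightarrow> y \<in> Omega \<Longrightarrow>
   \<bar>g (pik p k x) - g (pik p k y)\<bar> \<le> K * d x y powr \<beta>"
  unfolding HolB_def by auto

lemma HolB_mult:
  assumes h1: "HolB d p \<beta> g1 M1 K1" and h2: "HolB d p \<beta> g2 M2 K2"
  shows "HolB d p \<beta> (\<lambda>x. g1 x * g2 x) (M1 * M2) (M1 * K2 + M2 * K1)"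
  unfolding HolB_def
proof (intro conjI ballI allI impI)
  fix x assume x: "x \<in> Omega"
  show "\<bar>g1 x * g2 x\<bar> \<le> M1 * M2"
    unfolding abs_mult by (intro mult_mono HolB_bound[OF h1 x] HolB_bound[OF h2 x]) (auto intro: HolB_M_nonneg[OF h1])
next
  fix k x y assume x: "x \<in> Omega" and y: "y \<in> Omega"
  let ?a = "pik p k x" and ?b = "pik p k y"
  have a: "?a \<in> Omega" and b: "?b \<in> Omega" using pik_Omega p_I x y by auto
  have "\<bar>g1 ?a * g2 ?a - g1 ?b * g2 ?b\<bar> = \<bar>g1 ?a * (g2 ?a - g2 ?b) + g2 ?b * (g1 ?a - g1 ?b)\<bar>"
    by (simp add: algebra_simps)
  also have "\<dots> \<le> \<bar>g1 ?a\<bar> * \<bar>g2 ?a - g2 ?b\<bar> + \<bar>g2 ?b\<bar> * \<bar>g1 ?a - g1 ?b\<bar>"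
    by (metis abs_mult abs_triangle_ineq)
  also have "\<dots> \<le> M1 * (K2 * d x y powr \<beta>) + M2 * (K1 * d x y powr \<beta>)"
    by (intro add_mono mult_mono HolB_bound[OF h1 a] HolB_bound[OF h2 b] HolB_hol[OF h1 x y] HolB_hol[OF h2 x y])
       (auto intro: HolB_M_nonneg[OF h1] HolB_M_nonneg[OF h2])
  also have "\<dots> = (M1 * K2 + M2 * K1) * d x y powr \<beta>" by (simp add: algebra_simps)
  finally show "\<bar>g1 ?a * g2 ?a - g1 ?b * g2 ?b\<bar> \<le> (M1 * K2 + M2 * K1) * d x y powr \<beta>" .
qed

lemma exp_lip1: "(s::real) \<le> t \<Longrightarrow> t \<le> M \<Longrightarrow> exp t - exp s \<le> exp M * (t - s)"
proof -
  assume st: "s \<le> t" and tM: "t \<le> M"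
  have "1 + (s - t) \<le> exp (s - t)" by (rule exp_ge_add_one_self)
  then have "exp t * (1 + (s - t)) \<le> exp t * exp (s - t)" by (intro mult_left_mono) auto
  then have "exp t - exp s \<le> exp t * (t - s)" by (simp add: exp_diff algebra_simps)
  also have "\<dots> \<le> exp M * (t - s)" using st tM by (intro mult_right_mono) auto
  finally show ?thesis .
qed

lemma exp_lip: "(s::real) \<le> M \<Longrightarrow> t \<le> M \<Longrightarrow> \<bar>exp s - exp t\<bar> \<le> exp M * \<bar>s - t\<bar>"
  using exp_lip1[of s t M] exp_lip1[of t s M] by (cases "s \<le> t") (auto simp: abs_if)

lemma HolB_exp:
  assumes h: "HolB d p \<beta> g M K"
  shows "HolB d p \<beta> (\<lambda>x. exp (g x)) (exp M) (exp M * K)"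
  unfolding HolB_def
proof (intro conjI ballI allI impI)
  fix x assume x: "x \<in> Omega"
  show "\<bar>exp (g x)\<bar> \<le> exp M" using HolB_bound[OF h x] by simp
next
  fix k x y assume x: "x \<in> Omega" and y: "y \<in> Omega"
  let ?a = "pik p k x" and ?b = "pik p k y"
  have a: "?a \<in> Omega" and b: "?b \<in> Omega" using pik_Omega p_I x y by auto
  have "\<bar>exp (g ?a) - exp (g ?b)\<bar> \<le> exp M * \<bar>g ?a - g ?b\<bar>"
    using HolB_bound[OF h a] HolB_bound[OF h b] by (intro exp_lip) auto
  also have "\<dots> \<le> exp M * (K * d x y powr \<beta>)"
    by (intro mult_left_mono HolB_hol[OF h x y]) auto
  finally show "\<bar>exp (g ?a) - exp (g ?b)\<bar> \<le> exp M * K * d x y powr \<beta>" by simp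
qed

lemma Omega_ne2: "(\<lambda>_. 0) \<noteq> (\<lambda>_::int. 1/2::real)"
  by (metis zero_neq_numeral divide_eq_0_iff one_neq_zero)

lemma Cspace_HolB:
  assumes "\<Phi> \<in> Cspace d p \<beta>"
  shows "sup_norm \<Phi> = ereal (real_of_ereal (sup_norm \<Phi>))"
    and "holder_semi d p \<beta> \<Phi> = ereal (real_of_ereal (holder_semi d p \<beta> \<Phi>))"
    and "0 \<le> real_of_ereal (sup_norm \<Phi>)" and "0 \<le> real_of_ereal (holder_semi d p \<beta> \<Phi>)"
    and "HolB d p \<beta> \<Phi> (real_of_ereal (sup_norm \<Phi>)) (real_of_ereal (holder_semi d p \<beta> \<Phi>))"
    and "cont_d d \<Phi>"
proof -
  have fin: "sup_norm \<Phi> + holder_semi d p \<beta> \<Phi> < \<infinity>" and cd: "cont_d d \<Phi>"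
    using assms unfolding Cspace_def by auto
  show "cont_d d \<Phi>" by (rule cd)
  have s0: "0 \<le> sup_norm \<Phi>" unfolding sup_norm_def
    by (rule SUP_upper2[OF x0_Omega]) simp
  let ?S = "{(x, y). x \<in> Omega \<and> y \<in> Omega \<and> x \<noteq> y}"
  let ?F = "\<lambda>k xy. ereal (\<bar>\<Phi> (pik p k (fst xy)) - \<Phi> (pik p k (snd xy))\<bar> / (d (fst xy) (snd xy)) powr \<beta>)"
  have mem: "((\<lambda>_. 0), (\<lambda>_. 1/2)) \<in> ?S" using x0_Omega x1_Omega Omega_ne2 by auto
  have le: "?F k xy \<le> holder_semi d p \<beta> \<Phi>" if "xy \<in> ?S" for k xy
    unfolding holder_semi_def
    by (rule SUP_upper2[of k], simp, rule SUP_upper[OF that])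
  have h0: "0 \<le> holder_semi d p \<beta> \<Phi>"
    by (rule order_trans[OF _ le[OF mem, of 0]]) simp
  have sfin: "sup_norm \<Phi> \<noteq> \<infinity>" and hfin: "holder_semi d p \<beta> \<Phi> \<noteq> \<infinity>"
    using fin s0 h0 by auto
  show s1: "sup_norm \<Phi> = ereal (real_of_ereal (sup_norm \<Phi>))"
    using sfin s0 by (cases "sup_norm \<Phi>") auto
  show h1: "holder_semi d p \<beta> \<Phi> = ereal (real_of_ereal (holder_semi d p \<beta> \<Phi>))"
    using hfin h0 by (cases "holder_semi d p \<beta> \<Phi>") auto
  show "0 \<le> real_of_ereal (sup_norm \<Phi>)" using s0 by (simp add: real_of_ereal_pos)
  show "0 \<le> real_of_ereal (holder_semi d p \<beta> \<Phi>)" using h0 by (simp add: real_of_ereal_pos)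
  show "HolB d p \<beta> \<Phi> (real_of_ereal (sup_norm \<Phi>)) (real_of_ereal (holder_semi d p \<beta> \<Phi>))"
    unfolding HolB_def
  proof (intro conjI ballI allI impI)
    fix x assume x: "x \<in> Omega"
    have "ereal \<bar>\<Phi> x\<bar> \<le> sup_norm \<Phi>" unfolding sup_norm_def by (rule SUP_upper[OF x])
    then show "\<bar>\<Phi> x\<bar> \<le> real_of_ereal (sup_norm \<Phi>)" using s1 by (metis ereal_less_eq(3))
  next
    fix k x y assume x: "x \<in> Omega" and y: "y \<in> Omega"
    show "\<bar>\<Phi> (pik p k x) - \<Phi> (pik p k y)\<bar> \<le> real_of_ereal (holder_semi d p \<beta> \<Phi>) * d x y powr \<beta>"
    proof (cases "x = y")
      case True then show ?thesis using h0 by (simp add: real_of_ereal_pos)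
    next
      case False
      then have "?F k (x, y) \<le> holder_semi d p \<beta> \<Phi>" using x y by (intro le) auto
      then have "\<bar>\<Phi> (pik p k x) - \<Phi> (pik p k y)\<bar> / d x y powr \<beta> \<le> real_of_ereal (holder_semi d p \<beta> \<Phi>)"
        using h1 by (metis ereal_less_eq(3) fst_conv snd_conv)
      moreover have "0 < d x y powr \<beta>" using d_pos[OF x y False] by simp
      ultimately show ?thesis by (simp add: pos_divide_le_eq)
    qed
  qed
qed

lemma pik_Suc_pik: "pik p (Suc k) (pik p k w) = pik p k w"
  unfolding pik_def by auto

lemma pik_ba_Suc: "pik p k (branch_apply zeta (Suc k) c x) = pik p k (branch_apply zeta k c x)"
  unfolding pik_def branch_apply_def by auto

lemma branches_Suc: "branches b (Suc k) = PiE (insert (int (Suc k)) (insert (- int (Suc k)) {- int k..int k})) (\<lambda>_. {..<b})"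
proof -
  have "{- int (Suc k)..int (Suc k)} = insert (int (Suc k)) (insert (- int (Suc k)) {- int k..int k})"
    by auto
  then show ?thesis unfolding branches_def by simp
qed

lemma sum_branches_Suc:
  "(\<Sum>c\<in>branches b (Suc k). G (pik p k (branch_apply zeta k c x)))
     = real b * real b * (\<Sum>c\<in>branches b k. G (pik p k (branch_apply zeta k c x)))"
proof -
  have ind: "branch_apply zeta k (g(j := y)) x = branch_apply zeta k g x" if "\<bar>j\<bar> > int k" for g j y
    using that unfolding branch_apply_def by auto
  show ?thesis
    unfolding branches_Suc
    apply (subst sum_PiE_insert_indep)
        apply (simp_all add: ind)
    apply (subst sum_PiE_insert_indep)
       apply (simp_all add: ind branches_def)
    done
qed

lemma avgk_step:
  "avgk b zeta p G (Suc k) x - avgk b zeta p G k x =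
    (1 / real b ^ (2 * Suc k + 1)) * (\<Sum>c\<in>branches b (Suc k).
        G (pik p (Suc k) (branch_apply zeta (Suc k) c x)) - G (pik p k (branch_apply zeta (Suc k) c x)))"
proof -
  have "avgk b zeta p G k x = (1 / real b ^ (2 * Suc k + 1)) *
     (\<Sum>c\<in>branches b (Suc k). G (pik p k (branch_apply zeta k c x)))"
    unfolding avgk_def sum_branches_Suc using b_pos by (simp add: field_simps)
  then show ?thesis unfolding avgk_def pik_ba_Suc
    by (simp add: sum_subtractf right_diff_distrib)
qed

lemma avgk_conv:
  assumes h: "HolB d p \<beta> G M K" and K: "0 \<le> K" and x: "x \<in> Omega"
  shows "convergent (\<lambda>k. avgk b zeta p G k x)"
proof (rule conv_geom)
  show "0 \<le> \<theta> powr \<beta>" by simp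
  show "\<theta> powr \<beta> < 1" using powr_less_mono2[of \<beta> \<theta> 1] theta beta by simp
  fix k
  let ?B = "K * (D powr \<beta> * \<theta> powr \<beta>) * (\<theta> powr \<beta>) ^ k"
  have tb: "(\<theta> ^ Suc k * D) powr \<beta> = D powr \<beta> * \<theta> powr \<beta> * (\<theta> powr \<beta>) ^ k"
    using theta by (simp add: powr_mult powr_realpow[symmetric] powr_powr powr_power mult.commute)
  have trm: "\<bar>G (pik p (Suc k) (branch_apply zeta (Suc k) c x)) - G (pik p k (branch_apply zeta (Suc k) c x))\<bar> \<le> ?B"
    if c: "c \<in> branches b (Suc k)" for c
  proof -
    let ?w = "branch_apply zeta (Suc k) c x"
    have w: "?w \<in> Omega" using ba_Omega zeta_I c x by blast
    have w': "pik p k ?w \<in> Omega" using pik_Omega[OF p_I w] .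
    have "\<bar>G (pik p (Suc k) ?w) - G (pik p k ?w)\<bar> = \<bar>G (pik p (Suc k) ?w) - G (pik p (Suc k) (pik p k ?w))\<bar>"
      by (simp add: pik_Suc_pik)
    also have "\<dots> \<le> K * d ?w (pik p k ?w) powr \<beta>" by (rule HolB_hol[OF h w w'])
    also have "\<dots> \<le> K * (\<theta> ^ Suc k * D) powr \<beta>"
      using d_tail[OF w] d_nonneg[OF w w'] beta K by (intro mult_left_mono powr_mono2) auto
    finally show ?thesis using tb by (simp add: mult.assoc)
  qed
  have "\<bar>avgk b zeta p G (Suc k) x - avgk b zeta p G k x\<bar>
     = (1 / real b ^ (2 * Suc k + 1)) * \<bar>\<Sum>c\<in>branches b (Suc k).
        G (pik p (Suc k) (branch_apply zeta (Suc k) c x)) - G (pik p k (branch_apply zeta (Suc k) c x))\<bar>"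
    unfolding avgk_step by (simp add: abs_mult)
  also have "\<dots> \<le> (1 / real b ^ (2 * Suc k + 1)) * (real (card (branches b (Suc k))) * ?B)"
    by (intro mult_left_mono order_trans[OF sum_abs] sum_bounded_above trm) auto
  also have "\<dots> = ?B" using b_pos by (simp add: card_branches)
  finally show "\<bar>avgk b zeta p G (Suc k) x - avgk b zeta p G k x\<bar> \<le> K * (D powr \<beta> * \<theta> powr \<beta>) * (\<theta> powr \<beta>) ^ k" .
qed

lemma d_sym: "x \<in> Omega \<Longrightarrow> y \<in> Omega \<Longrightarrow> d x y = d y x"
proof -
  assume x: "x \<in> Omega" and y: "y \<in> Omega"
  have "\<And>k. dI (x k) (y k) = dI (y k) (x k)"
    using x y dI_metric unfolding metric_on_def Omega_def by auto
  then have "(\<lambda>k::int. \<theta> ^ nat \<bar>k\<bar> * dI (x k) (y k)) = (\<lambda>k. \<theta> ^ nat \<bar>k\<bar> * dI (y k) (x k))"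
    by (metis)
  then show ?thesis unfolding d_def dOm_def by (rule arg_cong)
qed

end

lemma wavg_bound:
  fixes w \<psi> :: "'a \<Rightarrow> real"
  assumes "finite I" "I \<noteq> {}" "\<And>c. c \<in> I \<Longrightarrow> 0 < w c" "\<And>c. c \<in> I \<Longrightarrow> \<bar>\<psi> c\<bar> \<le> B"
  shows "\<bar>(\<Sum>c\<in>I. w c * \<psi> c) / (\<Sum>c\<in>I. w c)\<bar> \<le> B"
proof -
  have W: "0 < (\<Sum>c\<in>I. w c)" using assms by (intro sum_pos) auto
  have "\<bar>\<Sum>c\<in>I. w c * \<psi> c\<bar> \<le> (\<Sum>c\<in>I. w c * B)"
  proof (rule order_trans[OF sum_abs], rule sum_mono)
    fix c assume c: "c \<in> I"
    have "\<bar>w c * \<psi> c\<bar> = w c * \<bar>\<psi> c\<bar>" using assms(3)[OF c] by (simp add: abs_mult)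
    also have "\<dots> \<le> w c * B" using assms(3,4)[OF c] by (intro mult_left_mono) auto
    finally show "\<bar>w c * \<psi> c\<bar> \<le> w c * B" .
  qed
  also have "\<dots> = B * (\<Sum>c\<in>I. w c)" by (subst sum_distrib_right[symmetric]) (rule mult.commute)
  finally have A: "\<bar>\<Sum>c\<in>I. w c * \<psi> c\<bar> \<le> B * (\<Sum>c\<in>I. w c)" .
  have "\<bar>(\<Sum>c\<in>I. w c * \<psi> c) / (\<Sum>c\<in>I. w c)\<bar> = \<bar>\<Sum>c\<in>I. w c * \<psi> c\<bar> / (\<Sum>c\<in>I. w c)"
    by (rule abs_div_pos[OF W, symmetric])
  also have "\<dots> \<le> B" by (rule mult_imp_div_pos_le[OF W A])
  finally show ?thesis .
qed

lemma ratio_avg: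
  fixes p q \<phi> :: "'a \<Rightarrow> real"
  assumes fin: "finite I" and ne: "I \<noteq> {}"
    and pos: "\<And>c. c \<in> I \<Longrightarrow> 0 < p c" "\<And>c. c \<in> I \<Longrightarrow> 0 < q c"
    and pq: "\<And>c. c \<in> I \<Longrightarrow> p c \<le> exp r * q c" and qp: "\<And>c. c \<in> I \<Longrightarrow> q c \<le> exp r * p c"
    and bd: "\<And>c. c \<in> I \<Longrightarrow> \<bar>\<phi> c\<bar> \<le> S" and r0: "0 \<le> r"
  shows "\<bar>(\<Sum>c\<in>I. p c * \<phi> c) / (\<Sum>c\<in>I. p c) - (\<Sum>c\<in>I. q c * \<phi> c) / (\<Sum>c\<in>I. q c)\<bar>
           \<le> S * (2 * (exp (2 * r) - 1))"
proof -
  define P where "P = (\<Sum>c\<in>I. p c)"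
  define Q where "Q = (\<Sum>c\<in>I. q c)"
  have P: "0 < P" unfolding P_def using fin ne pos by (intro sum_pos) auto
  have Q: "0 < Q" unfolding Q_def using fin ne pos by (intro sum_pos) auto
  have PQ: "P \<le> exp r * Q" unfolding P_def Q_def sum_distrib_left by (intro sum_mono pq)
  have QP: "Q \<le> exp r * P" unfolding P_def Q_def sum_distrib_left by (intro sum_mono qp)
  have S0: "0 \<le> S" using bd ne by (meson abs_ge_zero all_not_in_conv order_trans)
  define E where "E = exp (2 * r)"
  have E: "E = exp r * exp r" unfolding E_def by (simp add: exp_add[symmetric])
  have key: "p c / P \<le> E * (q c / Q)" if "c \<in> I" "\<And>c. c \<in> I \<Longrightarrow> p c \<le> exp r * q c" "Q \<le> exp r * P"
    and Pp: "0 < P" and Qp: "0 < Q" and qc: "0 < q c"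
    for c :: 'a and p q :: "'a \<Rightarrow> real" and P Q
  proof -
    have "p c * Q \<le> (exp r * q c) * (exp r * P)"
      by (intro mult_mono that) (use Qp qc in auto)
    then show ?thesis unfolding E using Pp Qp by (simp add: field_simps)
  qed
  have k1: "p c / P \<le> E * (q c / Q)" if "c \<in> I" for c
    using key[of c p q Q P, OF that pq QP P Q] pos that by auto
  have k2: "q c / Q \<le> E * (p c / P)" if "c \<in> I" for c
    using key[of c q p P Q, OF that qp PQ Q P] pos that by auto
  have E1: "1 \<le> E" unfolding E_def using r0 by simp
  have diff: "\<bar>p c / P - q c / Q\<bar> \<le> (E - 1) * (p c / P + q c / Q)" if "c \<in> I" for c
  proof -
    have n1: "0 \<le> p c / P" "0 \<le> q c / Q" using pos(1)[OF that] pos(2)[OF that] P Q by (simp_all add: less_imp_le)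
    have e1: "0 \<le> E - 1" using E1 by simp
    have "0 \<le> (E - 1) * (p c / P)" "0 \<le> (E - 1) * (q c / Q)"
      by (rule mult_nonneg_nonneg[OF e1 n1(1)], rule mult_nonneg_nonneg[OF e1 n1(2)])
    have gen: "\<bar>x - y\<bar> \<le> (E - 1) * (x + y)" if "x \<le> E * y" "y \<le> E * x" "0 \<le> (E - 1) * x" "0 \<le> (E - 1) * y"
      for x y :: real
      using that by (simp add: abs_if algebra_simps)
    show ?thesis by (rule gen) (use k1[OF that] k2[OF that] \<open>0 \<le> (E - 1) * (p c / P)\<close> \<open>0 \<le> (E - 1) * (q c / Q)\<close> in auto)
  qed
  have "(\<Sum>c\<in>I. p c * \<phi> c) / P - (\<Sum>c\<in>I. q c * \<phi> c) / Q = (\<Sum>c\<in>I. \<phi> c * (p c / P - q c / Q))"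
    by (simp add: sum_divide_distrib sum_subtractf algebra_simps)
  also have "\<bar>\<dots>\<bar> \<le> (\<Sum>c\<in>I. S * ((E - 1) * (p c / P + q c / Q)))"
    by (rule order_trans[OF sum_abs], rule sum_mono)
       (auto simp: abs_mult intro!: mult_mono bd diff S0)
  also have "\<dots> = S * (E - 1) * ((\<Sum>c\<in>I. p c) / P + (\<Sum>c\<in>I. q c) / Q)"
  proof -
    have "(\<Sum>c\<in>I. S * ((E - 1) * (p c / P + q c / Q))) = S * (E - 1) * (\<Sum>c\<in>I. p c / P + q c / Q)"
      by (simp add: sum_distrib_left mult.assoc)
    also have "(\<Sum>c\<in>I. p c / P + q c / Q) = (\<Sum>c\<in>I. p c) / P + (\<Sum>c\<in>I. q c) / Q"
      by (simp add: sum.distrib sum_divide_distrib)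
    finally show ?thesis .
  qed
  also have "\<dots> = S * (2 * (E - 1))" using P Q unfolding P_def Q_def by simp
  finally show ?thesis unfolding P_def Q_def E_def .
qed

locale lsetting = base +
  fixes f h :: "pt \<Rightarrow> real" and lam Mf Hf Mh Hh :: real
  assumes f_hol: "HolB d p \<beta> f Mf Hf" and Hf: "0 \<le> Hf"
    and h_hol: "HolB d p \<beta> h Mh Hh" and Hh: "0 \<le> Hh"
    and h_pos: "\<forall>x\<in>Omega. 0 < h x"
    and h_eig: "\<forall>x\<in>Omega. Pop b zeta p f h x = lam * h x"
    and h_bound: "\<forall>x\<in>Omega. \<forall>y\<in>Omega.
        h x \<le> exp (Hf * (\<eta> powr \<beta> / (1 - \<eta> powr \<beta>)) * d x y powr \<beta>) * h y"
begin

definition "Kh = Hf * (\<eta> powr \<beta> / (1 - \<eta> powr \<beta>))"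
definition "R = (Hf + Kh) * \<eta> powr \<beta>"
definition "Cst = 4 * R * exp (2 * R * D powr \<beta>)"

lemma eta_b: "\<eta> powr \<beta> < 1" using powr_less_mono2[of \<beta> \<eta> 1] eta beta by simp

lemma Kh: "0 \<le> Kh" unfolding Kh_def using eta_b Hf by simp

lemma R: "0 \<le> R" unfolding R_def using Kh Hf by simp

lemma Cst: "0 \<le> Cst" unfolding Cst_def using R by simp

lemma h_bound': "x \<in> Omega \<Longrightarrow> y \<in> Omega \<Longrightarrow> h x \<le> exp (Kh * d x y powr \<beta>) * h y"
  using h_bound unfolding Kh_def by blast

definition wt :: "nat \<Rightarrow> pt \<Rightarrow> (int \<Rightarrow> nat) \<Rightarrow> real" where
  "wt k u c = exp (f (pik p k (branch_apply zeta k c u))) * h (pik p k (branch_apply zeta k c u))"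

lemma a_Omega: "u \<in> Omega \<Longrightarrow> c \<in> branches b k \<Longrightarrow> pik p k (branch_apply zeta k c u) \<in> Omega"
  using pik_Omega[OF p_I] ba_Omega[OF zeta_I] by blast

lemma wt_pos: "u \<in> Omega \<Longrightarrow> c \<in> branches b k \<Longrightarrow> 0 < wt k u c"
  unfolding wt_def using a_Omega h_pos by auto

lemma wt_ratio:
  assumes u: "u \<in> Omega" and v: "v \<in> Omega" and c: "c \<in> branches b k"
  shows "wt k u c \<le> exp (R * d u v powr \<beta>) * wt k v c"
proof -
  let ?a = "pik p k (branch_apply zeta k c u)" and ?b = "pik p k (branch_apply zeta k c v)"
  have a: "?a \<in> Omega" and b: "?b \<in> Omega" using a_Omega u v c by auto
  have dab: "d ?a ?b powr \<beta> \<le> \<eta> powr \<beta> * d u v powr \<beta>"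
  proof -
    have "d ?a ?b powr \<beta> \<le> (\<eta> * d u v) powr \<beta>"
      using d_contract[OF u v c] d_nonneg[OF a b] beta by (intro powr_mono2) auto
    then show ?thesis by (simp add: powr_mult)
  qed
  have "f ?a - f ?b \<le> \<bar>f (pik p k ?a) - f (pik p k ?b)\<bar>" by (simp add: pik_idem)
  also have "\<dots> \<le> Hf * d ?a ?b powr \<beta>" by (rule HolB_hol[OF f_hol a b])
  also have "\<dots> \<le> Hf * (\<eta> powr \<beta> * d u v powr \<beta>)" by (intro mult_left_mono dab Hf)
  finally have ff: "f ?a \<le> f ?b + Hf * (\<eta> powr \<beta> * d u v powr \<beta>)" by simp
  have "h ?a \<le> exp (Kh * d ?a ?b powr \<beta>) * h ?b" by (rule h_bound'[OF a b])
  also have "\<dots> \<le> exp (Kh * (\<eta> powr \<beta> * d u v powr \<beta>)) * h ?b"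
    using h_pos b Kh dab by (intro mult_right_mono) (auto intro: mult_left_mono less_imp_le)
  finally have hh: "h ?a \<le> exp (Kh * (\<eta> powr \<beta> * d u v powr \<beta>)) * h ?b" .
  have "wt k u c \<le> exp (f ?b + Hf * (\<eta> powr \<beta> * d u v powr \<beta>)) * (exp (Kh * (\<eta> powr \<beta> * d u v powr \<beta>)) * h ?b)"
    unfolding wt_def using ff hh h_pos a by (intro mult_mono) auto
  also have "\<dots> = exp (R * d u v powr \<beta>) * wt k v c"
    unfolding wt_def R_def by (simp add: exp_add algebra_simps)
  finally show ?thesis .
qed

lemma HolB_ef:
  assumes g: "HolB d p \<beta> g M K" and K: "0 \<le> K"
  shows "\<exists>M' K'. 0 \<le> K' \<and> HolB d p \<beta> (\<lambda>y. exp (f y) * g y) M' K'"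
proof (intro exI conjI)
  show "HolB d p \<beta> (\<lambda>y. exp (f y) * g y) (exp Mf * M) (exp Mf * K + M * (exp Mf * Hf))"
    by (rule HolB_mult[OF HolB_exp[OF f_hol] g])
  show "0 \<le> exp Mf * K + M * (exp Mf * Hf)"
    using HolB_M_nonneg[OF g] K Hf by simp
qed

lemma Pk_conv:
  assumes g: "HolB d p \<beta> g M K" and K: "0 \<le> K" and u: "u \<in> Omega"
  shows "(\<lambda>k. Pk b zeta p f k g u) \<longlonglongrightarrow> Pop b zeta p f g u"
proof -
  obtain M' K' where K': "0 \<le> K'" and H: "HolB d p \<beta> (\<lambda>y. exp (f y) * g y) M' K'"
    using HolB_ef[OF g K] by blast
  have "convergent (\<lambda>k. Pk b zeta p f k g u)"
    unfolding Pk_avgk by (rule avgk_conv[OF H K' u])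
  then show ?thesis unfolding Pop_def by (simp add: convergent_LIMSEQ_iff)
qed

lemma Pk_h_lower: "u \<in> Omega \<Longrightarrow> exp (- Mf) * exp (- Kh * D powr \<beta>) * h u \<le> Pk b zeta p f k h u"
proof -
  assume u: "u \<in> Omega"
  have lb: "exp (- Mf) * exp (- Kh * D powr \<beta>) * h u \<le> wt k u c" if c: "c \<in> branches b k" for c
  proof -
    let ?a = "pik p k (branch_apply zeta k c u)"
    have a: "?a \<in> Omega" using a_Omega u c by auto
    have "exp (- Mf) \<le> exp (f ?a)" using HolB_bound[OF f_hol a] by simp
    moreover have "exp (- Kh * D powr \<beta>) * h u \<le> h ?a"
    proof -
      have "h u \<le> exp (Kh * d u ?a powr \<beta>) * h ?a" by (rule h_bound'[OF u a])
      also have "\<dots> \<le> exp (Kh * D powr \<beta>) * h ?a"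
        using Kh h_pos a d_le_D[OF u a] d_nonneg[OF u a] beta
        by (intro mult_right_mono) (auto intro!: mult_left_mono powr_mono2)
      finally show ?thesis by (simp add: exp_minus field_simps)
    qed
    moreover have "0 \<le> exp (- Kh * D powr \<beta>) * h u" using h_pos u by (simp add: less_imp_le)
    ultimately show ?thesis unfolding wt_def mult.assoc
      by (intro mult_mono) auto
  qed
  let ?m = "exp (- Mf) * exp (- Kh * D powr \<beta>) * h u"
  have "?m = (1 / real b ^ (2 * k + 1)) * (real b ^ (2 * k + 1) * ?m)"
    using b_pos by simp
  also have "\<dots> = (1 / real b ^ (2 * k + 1)) * (\<Sum>c\<in>branches b k. ?m)"
    by (simp only: sum_constant card_branches of_nat_power)
  also have "\<dots> \<le> (1 / real b ^ (2 * k + 1)) * (\<Sum>c\<in>branches b k. wt k u c)"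
    by (intro mult_left_mono sum_mono lb) auto
  also have "\<dots> = Pk b zeta p f k h u"
    unfolding Pk_def wt_def ..
  finally show ?thesis .
qed
end



context lsetting
begin

definition Qk :: "(pt \<Rightarrow> real) \<Rightarrow> nat \<Rightarrow> pt \<Rightarrow> real" where
  "Qk \<Phi> k u = Pk b zeta p f k (\<lambda>y. h y * \<Phi> y) u / Pk b zeta p f k h u"

lemma Qk_eq: "Qk \<Phi> k u = (\<Sum>c\<in>branches b k. wt k u c * \<Phi> (pik p k (branch_apply zeta k c u)))
                         / (\<Sum>c\<in>branches b k. wt k u c)"
proof -
  have "Pk b zeta p f k (\<lambda>y. h y * \<Phi> y) u = (1 / real b ^ (2 * k + 1)) *
          (\<Sum>c\<in>branches b k. wt k u c * \<Phi> (pik p k (branch_apply zeta k c u)))"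
    unfolding Pk_def wt_def by (simp add: mult.assoc)
  moreover have "Pk b zeta p f k h u = (1 / real b ^ (2 * k + 1)) * (\<Sum>c\<in>branches b k. wt k u c)"
    unfolding Pk_def wt_def ..
  ultimately show ?thesis unfolding Qk_def using b_pos
    by (simp only: mult_divide_mult_cancel_left_if) simp
qed

lemma Q_lim:
  assumes \<Phi>: "HolB d p \<beta> \<Phi> S H" and S0: "0 \<le> S" and H0: "0 \<le> H" and u: "u \<in> Omega"
  shows "(\<lambda>k. Qk \<Phi> k u) \<longlonglongrightarrow> Lop b zeta p f h lam \<Phi> u"
proof -
  have hP: "HolB d p \<beta> (\<lambda>y. h y * \<Phi> y) (Mh * S) (Mh * H + S * Hh)"
    by (rule HolB_mult[OF h_hol \<Phi>])
  have K0: "0 \<le> Mh * H + S * Hh" using HolB_M_nonneg[OF h_hol] H0 S0 Hh by simp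
  have N: "(\<lambda>k. Pk b zeta p f k (\<lambda>y. h y * \<Phi> y) u) \<longlonglongrightarrow> Pop b zeta p f (\<lambda>y. h y * \<Phi> y) u"
    by (rule Pk_conv[OF hP K0 u])
  have W: "(\<lambda>k. Pk b zeta p f k h u) \<longlonglongrightarrow> lam * h u"
    using Pk_conv[OF h_hol Hh u] h_eig u by simp
  have "exp (- Mf) * exp (- Kh * D powr \<beta>) * h u \<le> lam * h u"
    by (rule LIMSEQ_le_const[OF W]) (use Pk_h_lower[OF u] in auto)
  moreover have "0 < exp (- Mf) * exp (- Kh * D powr \<beta>) * h u" using h_pos u by simp
  ultimately have "lam * h u \<noteq> 0" by linarith
  from tendsto_divide[OF N W this] show ?thesis
    unfolding Qk_def Lop_def .
qed

lemma exp_bound: "0 \<le> (r::real) \<Longrightarrow> exp (2 * r) - 1 \<le> 2 * r * exp (2 * r)"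
proof -
  assume "0 \<le> r"
  have "1 + (- 2 * r) \<le> exp (- 2 * r)" by (rule exp_ge_add_one_self)
  then have "exp (2 * r) * (1 - 2 * r) \<le> exp (2 * r) * exp (- 2 * r)" by (intro mult_left_mono) auto
  also have "\<dots> = 1" by (simp add: exp_add[symmetric])
  finally show ?thesis by (simp add: algebra_simps)
qed

lemma Qk_bound:
  assumes \<Phi>: "HolB d p \<beta> \<Phi> S H" and u: "u \<in> Omega"
  shows "\<bar>Qk \<Phi> k u\<bar> \<le> S"
  unfolding Qk_eq
  by (rule wavg_bound) (use finite_branches branches_ne b_pos wt_pos u a_Omega HolB_bound[OF \<Phi>] in auto)

lemma Qk_diff:
  assumes \<Phi>: "HolB d p \<beta> \<Phi> S H" and S0: "0 \<le> S" and H0: "0 \<le> H"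
    and u: "u \<in> Omega" and v: "v \<in> Omega"
  shows "\<bar>Qk \<Phi> k u - Qk \<Phi> k v\<bar> \<le> (H * \<eta> powr \<beta> + S * Cst) * d u v powr \<beta>"
proof -
  define I where "I = branches b k"
  define a where "a c = pik p k (branch_apply zeta k c u)" for c
  define bb where "bb c = pik p k (branch_apply zeta k c v)" for c
  define P where "P c = wt k u c" for c
  define Q where "Q c = wt k v c" for c
  define r where "r = R * d u v powr \<beta>"
  have fin: "finite I" and ne: "I \<noteq> {}" unfolding I_def using finite_branches branches_ne b_pos by auto
  have aO: "a c \<in> Omega" and bO: "bb c \<in> Omega" if "c \<in> I" for c
    using a_Omega u v that unfolding a_def bb_def I_def by auto
  have Pp: "0 < P c" and Qp: "0 < Q c" if "c \<in> I" for c
    using wt_pos u v that unfolding P_def Q_def I_def by auto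
  have r0: "0 \<le> r" unfolding r_def using R by simp
  have PQ: "P c \<le> exp r * Q c" if "c \<in> I" for c
    unfolding P_def Q_def r_def using wt_ratio[OF u v] that unfolding I_def by auto
  have QP: "Q c \<le> exp r * P c" if "c \<in> I" for c
    unfolding P_def Q_def r_def using wt_ratio[OF v u] that d_sym[OF u v] unfolding I_def by auto
  have dd: "\<bar>\<Phi> (a c) - \<Phi> (bb c)\<bar> \<le> H * (\<eta> powr \<beta> * d u v powr \<beta>)" if c: "c \<in> I" for c
  proof -
    have "\<bar>\<Phi> (a c) - \<Phi> (bb c)\<bar> = \<bar>\<Phi> (pik p k (a c)) - \<Phi> (pik p k (bb c))\<bar>"
      unfolding a_def bb_def by (simp add: pik_idem)
    also have "\<dots> \<le> H * d (a c) (bb c) powr \<beta>" by (rule HolB_hol[OF \<Phi> aO[OF c] bO[OF c]])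
    also have "\<dots> \<le> H * (\<eta> * d u v) powr \<beta>"
      using d_contract[OF u v] c d_nonneg[OF aO[OF c] bO[OF c]] beta H0
      unfolding a_def bb_def I_def by (intro mult_left_mono powr_mono2) auto
    finally show ?thesis by (simp add: powr_mult)
  qed
  have eqQ: "Qk \<Phi> k u - Qk \<Phi> k v =
     (\<Sum>c\<in>I. P c * (\<Phi> (a c) - \<Phi> (bb c))) / (\<Sum>c\<in>I. P c)
     + ((\<Sum>c\<in>I. P c * \<Phi> (bb c)) / (\<Sum>c\<in>I. P c) - (\<Sum>c\<in>I. Q c * \<Phi> (bb c)) / (\<Sum>c\<in>I. Q c))"
    unfolding Qk_eq I_def P_def Q_def a_def bb_def
    by (simp add: diff_divide_distrib right_diff_distrib sum_subtractf)
  have t1: "\<bar>(\<Sum>c\<in>I. P c * (\<Phi> (a c) - \<Phi> (bb c))) / (\<Sum>c\<in>I. P c)\<bar> \<le> H * (\<eta> powr \<beta> * d u v powr \<beta>)"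
    by (rule wavg_bound[OF fin ne Pp dd])
  have t2: "\<bar>(\<Sum>c\<in>I. P c * \<Phi> (bb c)) / (\<Sum>c\<in>I. P c) - (\<Sum>c\<in>I. Q c * \<Phi> (bb c)) / (\<Sum>c\<in>I. Q c)\<bar>
      \<le> S * (2 * (exp (2 * r) - 1))"
    by (rule ratio_avg[OF fin ne Pp Qp PQ QP _ r0]) (use HolB_bound[OF \<Phi> bO] in auto)
  have "2 * (exp (2 * r) - 1) \<le> 2 * (2 * r * exp (2 * r))" using exp_bound[OF r0] by simp
  also have "\<dots> \<le> 2 * (2 * r * exp (2 * R * D powr \<beta>))"
  proof -
    have "d u v powr \<beta> \<le> D powr \<beta>" using d_le_D[OF u v] d_nonneg[OF u v] beta by (intro powr_mono2) auto
    then have "2 * r \<le> 2 * R * D powr \<beta>" unfolding r_def using R by (simp add: mult_left_mono)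
    then show ?thesis using r0 by (intro mult_left_mono) auto
  qed
  also have "\<dots> = Cst * d u v powr \<beta>" unfolding Cst_def r_def by simp
  finally have t2': "S * (2 * (exp (2 * r) - 1)) \<le> S * (Cst * d u v powr \<beta>)" using S0 by (intro mult_left_mono)
  have "\<bar>Qk \<Phi> k u - Qk \<Phi> k v\<bar> \<le> \<bar>(\<Sum>c\<in>I. P c * (\<Phi> (a c) - \<Phi> (bb c))) / (\<Sum>c\<in>I. P c)\<bar>
     + \<bar>(\<Sum>c\<in>I. P c * \<Phi> (bb c)) / (\<Sum>c\<in>I. P c) - (\<Sum>c\<in>I. Q c * \<Phi> (bb c)) / (\<Sum>c\<in>I. Q c)\<bar>"
    unfolding eqQ by (rule abs_triangle_ineq)
  also have "\<dots> \<le> H * (\<eta> powr \<beta> * d u v powr \<beta>) + S * (Cst * d u v powr \<beta>)"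
    by (rule add_mono[OF t1 order_trans[OF t2 t2']])
  also have "\<dots> = (H * \<eta> powr \<beta> + S * Cst) * d u v powr \<beta>" by (simp add: algebra_simps)
  finally show ?thesis .
qed

lemma Lop_est:
  assumes \<Phi>: "HolB d p \<beta> \<Phi> S H" and S0: "0 \<le> S" and H0: "0 \<le> H"
  shows "u \<in> Omega \<Longrightarrow> \<bar>Lop b zeta p f h lam \<Phi> u\<bar> \<le> S"
    and "u \<in> Omega \<Longrightarrow> v \<in> Omega \<Longrightarrow>
         \<bar>Lop b zeta p f h lam \<Phi> u - Lop b zeta p f h lam \<Phi> v\<bar> \<le> (H * \<eta> powr \<beta> + S * Cst) * d u v powr \<beta>"
proof -
  assume u: "u \<in> Omega"
  show "\<bar>Lop b zeta p f h lam \<Phi> u\<bar> \<le> S"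
    by (rule LIMSEQ_le_const2[OF tendsto_rabs[OF Q_lim[OF \<Phi> S0 H0 u]]]) (use Qk_bound[OF \<Phi> u] in auto)
next
  assume u: "u \<in> Omega" and v: "v \<in> Omega"
  show "\<bar>Lop b zeta p f h lam \<Phi> u - Lop b zeta p f h lam \<Phi> v\<bar> \<le> (H * \<eta> powr \<beta> + S * Cst) * d u v powr \<beta>"
    by (rule LIMSEQ_le_const2[OF tendsto_rabs[OF tendsto_diff[OF Q_lim[OF \<Phi> S0 H0 u] Q_lim[OF \<Phi> S0 H0 v]]]])
       (use Qk_diff[OF \<Phi> S0 H0 u v] in auto)
qed

end



locale esetting = lsetting +
  fixes E :: "pt \<Rightarrow> pt" and C_E :: real
  assumes E_bij: "bij_betw E Omega Omega"
    and CE: "0 < C_E" "C_E * \<eta> < 1"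
    and E_lip0: "\<forall>x\<in>Omega. \<forall>y\<in>Omega. d (inv_into Omega E x) (inv_into Omega E y) \<le> C_E * d x y"
begin

definition "Kc = Cst * C_E powr \<beta>"
definition "aa = (C_E * \<eta>) powr \<beta>"

lemma Einv_Omega: "x \<in> Omega \<Longrightarrow> inv_into Omega E x \<in> Omega"
  by (rule bij_betw_apply[OF bij_betw_inv_into[OF E_bij]])

lemma Lcal_eq: "Lcal b zeta p f h lam E \<Phi> x = Lop b zeta p f h lam \<Phi> (inv_into Omega E x)"
  unfolding Lcal_def ..

lemma step:
  assumes \<Psi>: "\<Psi> \<in> Cspace d p \<beta>"
  defines "S \<equiv> real_of_ereal (sup_norm \<Psi>)" and "H \<equiv> real_of_ereal (holder_semi d p \<beta> \<Psi>)"
  shows "Lcal b zeta p f h lam E \<Psi> \<in> Cspace d p \<beta>"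
    and "real_of_ereal (sup_norm (Lcal b zeta p f h lam E \<Psi>)) \<le> S"
    and "real_of_ereal (holder_semi d p \<beta> (Lcal b zeta p f h lam E \<Psi>)) \<le> aa * H + Kc * S"
proof -
  note C = Cspace_HolB[OF \<Psi>, folded S_def H_def]
  have hol: "HolB d p \<beta> \<Psi> S H" and S0: "0 \<le> S" and H0: "0 \<le> H" using C by auto
  let ?L = "Lcal b zeta p f h lam E \<Psi>"
  define K' where "K' = H * \<eta> powr \<beta> + S * Cst"
  have K': "0 \<le> K'" unfolding K'_def using S0 H0 Cst by simp
  have LE: "\<bar>?L x - ?L y\<bar> \<le> K' * (C_E * d x y) powr \<beta>" if x: "x \<in> Omega" and y: "y \<in> Omega" for x y
  proof -
    have "\<bar>?L x - ?L y\<bar> \<le> K' * d (inv_into Omega E x) (inv_into Omega E y) powr \<beta>"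
      unfolding Lcal_eq K'_def by (rule Lop_est(2)[OF hol S0 H0 Einv_Omega[OF x] Einv_Omega[OF y]])
    also have "\<dots> \<le> K' * (C_E * d x y) powr \<beta>"
      using E_lip0 x y d_nonneg[OF Einv_Omega[OF x] Einv_Omega[OF y]] beta K'
      by (intro mult_left_mono powr_mono2) auto
    finally show ?thesis .
  qed
  have LS: "\<bar>?L x\<bar> \<le> S" if x: "x \<in> Omega" for x
    unfolding Lcal_eq by (rule Lop_est(1)[OF hol S0 H0 Einv_Omega[OF x]])
  have sup: "sup_norm ?L \<le> ereal S"
    unfolding sup_norm_def by (rule SUP_least) (use LS in auto)
  define B where "B = aa * H + Kc * S"
  have KB: "K' * (C_E * t) powr \<beta> = B * t powr \<beta>" if "0 \<le> t" for t
    unfolding B_def K'_def aa_def Kc_def using CE that by (simp add: powr_mult algebra_simps)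
  have hol_le: "holder_semi d p \<beta> ?L \<le> ereal B"
    unfolding holder_semi_def
  proof (intro SUP_least)
    fix k xy assume xy: "xy \<in> {(x, y). x \<in> Omega \<and> y \<in> Omega \<and> x \<noteq> y}"
    obtain x y where xy': "xy = (x, y)" and x: "x \<in> Omega" and y: "y \<in> Omega" and ne: "x \<noteq> y"
      using xy by auto
    have px: "pik p k x \<in> Omega" and py: "pik p k y \<in> Omega" using pik_Omega[OF p_I] x y by auto
    have "\<bar>?L (pik p k x) - ?L (pik p k y)\<bar> \<le> K' * (C_E * d (pik p k x) (pik p k y)) powr \<beta>"
      by (rule LE[OF px py])
    also have "\<dots> \<le> K' * (C_E * d x y) powr \<beta>"
      using d_pik[OF x y] d_nonneg[OF px py] CE beta K'
      by (intro mult_left_mono powr_mono2) auto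
    also have "\<dots> = B * d x y powr \<beta>" using KB d_nonneg[OF x y] by simp
    finally have n: "\<bar>?L (pik p k x) - ?L (pik p k y)\<bar> \<le> B * d x y powr \<beta>" .
    have pos: "0 < d x y powr \<beta>" using d_pos[OF x y ne] by simp
    have "\<bar>?L (pik p k x) - ?L (pik p k y)\<bar> / d x y powr \<beta> \<le> B"
      by (rule mult_imp_div_pos_le[OF pos n])
    then show "ereal (\<bar>?L (pik p k (fst xy)) - ?L (pik p k (snd xy))\<bar> / d (fst xy) (snd xy) powr \<beta>) \<le> ereal B"
      unfolding xy' by simp
  qed
  have cont: "cont_d d ?L"
    unfolding cont_d_def
  proof (intro ballI allI impI)
    fix x \<epsilon> assume x: "x \<in> Omega" and e: "(0::real) < \<epsilon>"
    define w where "w = \<epsilon> / (K' + 1)"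
    have w: "0 < w" unfolding w_def using e K' by simp
    define z where "z = w powr (1 / \<beta>)"
    have z: "0 < z" unfolding z_def using w by simp
    have zb: "z powr \<beta> = w" unfolding z_def using w beta by (simp add: powr_powr)
    have Kw: "K' * w < \<epsilon>" unfolding w_def using e K' by (simp add: field_simps)
    show "\<exists>\<delta>>0. \<forall>y\<in>Omega. d x y < \<delta> \<longrightarrow> \<bar>?L y - ?L x\<bar> < \<epsilon>"
    proof (intro exI conjI ballI impI)
      show "0 < z / C_E" using z CE by simp
      fix y assume y: "y \<in> Omega" and dy: "d x y < z / C_E"
      have cd: "C_E * d x y < z" using dy CE by (simp add: field_simps)
      have "(C_E * d x y) powr \<beta> < z powr \<beta>"
        by (rule powr_less_mono2) (use beta CE d_nonneg[OF x y] cd in auto)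
      then have lt: "(C_E * d x y) powr \<beta> \<le> w" using zb by simp
      have "\<bar>?L y - ?L x\<bar> = \<bar>?L x - ?L y\<bar>" by (rule abs_minus_commute)
      also have "\<dots> \<le> K' * (C_E * d x y) powr \<beta>" by (rule LE[OF x y])
      also have "\<dots> \<le> K' * w" by (rule mult_left_mono[OF lt K'])
      also have "\<dots> < \<epsilon>" by (rule Kw)
      finally show "\<bar>?L y - ?L x\<bar> < \<epsilon>" .
    qed
  qed
  have sup0: "0 \<le> sup_norm ?L" unfolding sup_norm_def
    by (rule SUP_upper2[OF x0_Omega]) simp
  have fin: "sup_norm ?L + holder_semi d p \<beta> ?L < \<infinity>"
  proof -
    have "sup_norm ?L + holder_semi d p \<beta> ?L \<le> ereal S + ereal B"
      by (rule add_mono[OF sup hol_le])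
    also have "\<dots> < \<infinity>" by simp
    finally show ?thesis .
  qed
  show LC: "?L \<in> Cspace d p \<beta>" unfolding Cspace_def using cont fin by auto
  note C2 = Cspace_HolB[OF LC]
  show "real_of_ereal (sup_norm ?L) \<le> S"
    using sup C2(1) by (metis ereal_less_eq(3))
  show "real_of_ereal (holder_semi d p \<beta> ?L) \<le> aa * H + Kc * S"
    using hol_le C2(2) unfolding B_def by (metis ereal_less_eq(3))
qed

lemma iter:
  assumes \<Phi>: "\<Phi> \<in> Cspace d p \<beta>"
  defines "S \<equiv> real_of_ereal (sup_norm \<Phi>)" and "H \<equiv> real_of_ereal (holder_semi d p \<beta> \<Phi>)"
  shows "(Lcal b zeta p f h lam E ^^ n) \<Phi> \<in> Cspace d p \<beta> \<and>
         real_of_ereal (sup_norm ((Lcal b zeta p f h lam E ^^ n) \<Phi>)) \<le> S \<and>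
         real_of_ereal (holder_semi d p \<beta> ((Lcal b zeta p f h lam E ^^ n) \<Phi>))
           \<le> aa ^ n * H + Kc * S * (\<Sum>i<n. aa ^ i)"
proof (induction n)
  case 0
  then show ?case using \<Phi> unfolding S_def H_def by simp
next
  case (Suc n)
  let ?P = "(Lcal b zeta p f h lam E ^^ n) \<Phi>"
  have P: "?P \<in> Cspace d p \<beta>" and sP: "real_of_ereal (sup_norm ?P) \<le> S"
    and hP: "real_of_ereal (holder_semi d p \<beta> ?P) \<le> aa ^ n * H + Kc * S * (\<Sum>i<n. aa ^ i)"
    using Suc by auto
  have aa0: "0 \<le> aa" unfolding aa_def by simp
  have Kc0: "0 \<le> Kc" unfolding Kc_def using Cst by simp
  note st = step[OF P]
  have "real_of_ereal (holder_semi d p \<beta> (Lcal b zeta p f h lam E ?P))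
     \<le> aa * real_of_ereal (holder_semi d p \<beta> ?P) + Kc * real_of_ereal (sup_norm ?P)" by (rule st(3))
  also have "\<dots> \<le> aa * (aa ^ n * H + Kc * S * (\<Sum>i<n. aa ^ i)) + Kc * S"
    by (intro add_mono mult_left_mono hP sP aa0 Kc0)
  also have "\<dots> = aa ^ Suc n * H + Kc * S * (\<Sum>i<Suc n. aa ^ i)"
  proof -
    have "(\<Sum>i<Suc n. aa ^ i) = 1 + aa * (\<Sum>i<n. aa ^ i)"
      unfolding sum.lessThan_Suc_shift by (simp add: sum_distrib_left)
    then show ?thesis by (simp add: algebra_simps)
  qed
  finally show ?case using st(1,2) sP by auto
qed

end



theorem mainTheorem10:
  fixes dI :: "real \<Rightarrow> real \<Rightarrow> real" and \<theta> \<eta> \<beta> C_E lam p :: real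
    and \<tau> :: "real \<Rightarrow> real" and b :: nat and zeta :: "nat \<Rightarrow> real \<Rightarrow> real"
    and f h :: "pt \<Rightarrow> real" and E :: "pt \<Rightarrow> pt" and \<nu>0 :: "pt measure"
  defines "d \<equiv> dOm dI \<theta>"
  assumes dI_metric: "metric_on Iset dI"
    and dI_bdd: "bdd_above {dI s t | s t. s \<in> Iset \<and> t \<in> Iset}"
    and theta: "0 < \<theta>" "\<theta> < 1"
    and tau_I: "\<forall>t\<in>Iset. \<tau> t \<in> Iset"
    and b_pos: "0 < b"
    and branches_inv: "\<forall>j<b. \<forall>t\<in>Iset. zeta j t \<in> Iset \<and> \<tau> (zeta j t) = t"
    and full_branches: "\<forall>t\<in>Iset. {s\<in>Iset. \<tau> s = t} = (\<lambda>j. zeta j t) ` {..<b}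
                           \<and> card {s\<in>Iset. \<tau> s = t} = b"
    and fixed: "p \<in> Iset" "\<tau> p = p"
    and eta: "0 < \<eta>" "\<eta> < 1"
    and contract: "\<forall>j<b. \<forall>s\<in>Iset. \<forall>t\<in>Iset. dI (zeta j s) (zeta j t) \<le> \<eta> * dI s t"
    and beta: "0 < \<beta>" "\<beta> \<le> 1"
    and f_C: "f \<in> Cspace d p \<beta>"
    and nu_space: "space \<nu>0 = Omega" and nu_sets: "sets \<nu>0 = borel_d d"
    and nu_prob: "prob_space \<nu>0"
    and nu_eig: "\<forall>\<Phi>\<in>Cspace d p \<beta>.
                   (\<integral>x. Pop b zeta p f \<Phi> x \<partial>\<nu>0) = lam * (\<integral>x. \<Phi> x \<partial>\<nu>0)"
    and lambda_def: "lam = (\<integral>x. Pop b zeta p f (\<lambda>_. 1) x \<partial>\<nu>0)"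
    and h_C: "h \<in> Cspace d p \<beta>"
    and h_pos: "\<forall>x\<in>Omega. 0 < h x"
    and h_eig: "\<forall>x\<in>Omega. Pop b zeta p f h x = lam * h x"
    and h_norm: "(\<integral>x. h x \<partial>\<nu>0) = 1"
    and h_bound: "\<forall>x\<in>Omega. \<forall>y\<in>Omega.
        h x \<le> exp (real_of_ereal (holder_semi d p \<beta> f) * (\<eta> powr \<beta> / (1 - \<eta> powr \<beta>))
                   * d x y powr \<beta>) * h y"
    and E_bij: "bij_betw E Omega Omega"
    and C_E: "0 < C_E" "C_E < 1 / \<eta>"
    and E_lip: "\<forall>n::int. \<forall>x\<in>Omega. \<forall>y\<in>Omega.
        d (shiftn n (inv_into Omega E x)) (shiftn n (inv_into Omega E y))
          \<le> C_E * d (shiftn n x) (shiftn n y)"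
  shows "(\<forall>\<Phi>\<in>Cspace d p \<beta>. Lcal b zeta p f h lam E \<Phi> \<in> Cspace d p \<beta>) \<and>
    (\<exists>C6::real. \<forall>\<Phi>\<in>Cspace d p \<beta>. \<forall>n::nat. n \<ge> 1 \<longrightarrow>
       holder_semi d p \<beta> ((Lcal b zeta p f h lam E ^^ n) \<Phi>)
         \<le> holder_semi d p \<beta> \<Phi> * ereal ((C_E * \<eta>) powr (\<beta> * real n))
           + ereal C6 * sup_norm \<Phi> * ereal (C_E powr \<beta> * (\<Sum>i. (C_E * \<eta>) powr (real i * \<beta>))))"
proof -
  interpret B: base dI \<theta> \<eta> \<beta> p b zeta d
    by unfold_locales (use d_def dI_metric dI_bdd theta b_pos branches_inv fixed eta contract beta in auto)
  note fC = B.Cspace_HolB[OF f_C] and hC = B.Cspace_HolB[OF h_C]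
  interpret L: lsetting dI \<theta> \<eta> \<beta> p b zeta d f h lam "real_of_ereal (sup_norm f)"
      "real_of_ereal (holder_semi d p \<beta> f)" "real_of_ereal (sup_norm h)" "real_of_ereal (holder_semi d p \<beta> h)"
    by unfold_locales (use fC hC h_pos h_eig h_bound in auto)
  have CE1: "C_E * \<eta> < 1" using C_E eta by (simp add: field_simps)
  have lip0: "\<forall>x\<in>Omega. \<forall>y\<in>Omega. d (inv_into Omega E x) (inv_into Omega E y) \<le> C_E * d x y"
  proof (intro ballI)
    fix x y assume "x \<in> Omega" "y \<in> Omega"
    then have "d (shiftn 0 (inv_into Omega E x)) (shiftn 0 (inv_into Omega E y)) \<le> C_E * d (shiftn 0 x) (shiftn 0 y)"
      using E_lip by blast
    moreover have "\<And>z. shiftn 0 z = z" unfolding shiftn_def by simp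
    ultimately show "d (inv_into Omega E x) (inv_into Omega E y) \<le> C_E * d x y" by simp
  qed
  interpret Es: esetting dI \<theta> \<eta> \<beta> p b zeta d f h lam "real_of_ereal (sup_norm f)"
      "real_of_ereal (holder_semi d p \<beta> f)" "real_of_ereal (sup_norm h)" "real_of_ereal (holder_semi d p \<beta> h)" E C_E
    by unfold_locales (use E_bij C_E CE1 lip0 in auto)
  have part1: "\<forall>\<Phi>\<in>Cspace d p \<beta>. Lcal b zeta p f h lam E \<Phi> \<in> Cspace d p \<beta>"
    using Es.step(1) by blast
  have aa1: "Es.aa < 1"
  proof -
    have "(C_E * \<eta>) powr \<beta> < 1 powr \<beta>"
      by (rule powr_less_mono2) (use beta C_E eta CE1 in auto)
    then show ?thesis unfolding Es.aa_def by simp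
  qed
  have aa0: "0 \<le> Es.aa" unfolding Es.aa_def by simp
  have CEeta: "C_E * \<eta> \<noteq> 0" using C_E eta by simp
  have aapow: "Es.aa ^ i = (C_E * \<eta>) powr (real i * \<beta>)" for i
    unfolding Es.aa_def by (rule powr_power[OF CEeta])
  have summ: "summable (\<lambda>i. Es.aa ^ i)" by (rule summable_geometric) (use aa0 aa1 in simp)
  have part2: "\<forall>\<Phi>\<in>Cspace d p \<beta>. \<forall>n::nat. n \<ge> 1 \<longrightarrow>
       holder_semi d p \<beta> ((Lcal b zeta p f h lam E ^^ n) \<Phi>)
         \<le> holder_semi d p \<beta> \<Phi> * ereal ((C_E * \<eta>) powr (\<beta> * real n))
           + ereal L.Cst * sup_norm \<Phi> * ereal (C_E powr \<beta> * (\<Sum>i. (C_E * \<eta>) powr (real i * \<beta>)))"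
  proof (intro ballI allI impI)
    fix \<Phi> :: "pt \<Rightarrow> real" and n :: nat
    assume \<Phi>: "\<Phi> \<in> Cspace d p \<beta>"
    define S where "S = real_of_ereal (sup_norm \<Phi>)"
    define H where "H = real_of_ereal (holder_semi d p \<beta> \<Phi>)"
    let ?P = "(Lcal b zeta p f h lam E ^^ n) \<Phi>"
    have it: "?P \<in> Cspace d p \<beta>"
      "real_of_ereal (holder_semi d p \<beta> ?P) \<le> Es.aa ^ n * H + Es.Kc * S * (\<Sum>i<n. Es.aa ^ i)"
      using Es.iter[OF \<Phi>, of n] unfolding S_def H_def by auto
    note PC = B.Cspace_HolB[OF it(1)] and FC = B.Cspace_HolB[OF \<Phi>]
    have S0: "0 \<le> S" and H0: "0 \<le> H" using FC unfolding S_def H_def by auto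
    have Kc0: "0 \<le> Es.Kc" unfolding Es.Kc_def using L.Cst by simp
    have "(\<Sum>i<n. Es.aa ^ i) \<le> (\<Sum>i. Es.aa ^ i)"
      by (rule sum_le_suminf[OF summ]) (use aa0 in auto)
    then have "Es.Kc * S * (\<Sum>i<n. Es.aa ^ i) \<le> Es.Kc * S * (\<Sum>i. Es.aa ^ i)"
      using Kc0 S0 by (intro mult_left_mono) auto
    with it(2) have le: "real_of_ereal (holder_semi d p \<beta> ?P) \<le> Es.aa ^ n * H + Es.Kc * S * (\<Sum>i. Es.aa ^ i)"
      by linarith
    have sumeq: "(\<Sum>i. (C_E * \<eta>) powr (real i * \<beta>)) = (\<Sum>i. Es.aa ^ i)" by (simp add: aapow)
    have neq: "(C_E * \<eta>) powr (\<beta> * real n) = Es.aa ^ n" by (simp add: aapow mult.commute)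
    have "holder_semi d p \<beta> ?P = ereal (real_of_ereal (holder_semi d p \<beta> ?P))" by (rule PC(2))
    also have "\<dots> \<le> ereal (Es.aa ^ n * H + Es.Kc * S * (\<Sum>i. Es.aa ^ i))" using le by simp
    also have "\<dots> = holder_semi d p \<beta> \<Phi> * ereal ((C_E * \<eta>) powr (\<beta> * real n))
           + ereal L.Cst * sup_norm \<Phi> * ereal (C_E powr \<beta> * (\<Sum>i. (C_E * \<eta>) powr (real i * \<beta>)))"
      unfolding sumeq neq FC(1)[folded S_def] FC(2)[folded H_def]
      by (simp add: Es.Kc_def algebra_simps)
    finally show "holder_semi d p \<beta> ?P \<le> holder_semi d p \<beta> \<Phi> * ereal ((C_E * \<eta>) powr (\<beta> * real n))
           + ereal L.Cst * sup_norm \<Phi> * ereal (C_E powr \<beta> * (\<Sum>i. (C_E * \<eta>) powr (real i * \<beta>)))" .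
  qed
  show ?thesis using part1 part2 by blast
qed


end
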